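(* For every positive integer $n$, the number of circular permutations of $[n]=\{1,2,\ldots,n\}$ that avoid the pattern $1324$ equals the Fibonacci number $F_{2n-3}$.
   Context: A circular permutation of $[n]$ is an arrangement of $1,2,\ldots,n$ clockwise around a circle, two arrangements being identified if they differ by a rotation. Equivalently, it can be represented uniquely as a linear permutation $\pi_1\pi_2\cdots\pi_n$ of $[n]$ with $\pi_n=n$, whose rotations $\pi_i\pi_{i+1}\cdots\pi_n\pi_1\cdots\pi_{i-1}$ all represent the same circular permutation. The reduced form of a sequence of distinct positive integers is obtained by replacing its smallest entry by $1$, its next smallest by $2$, and so on; a pattern is such a reduced form. An occurrence of a pattern $\tau$ of length $m$ in a circular permutation $\pi$ is a sequence of $m$ letters of $\pi$ read in clockwise order and lying within one revolution (i.e., a subsequence of some rotation of the linear representation) whose reduced form is $\tau$; $\pi$ avoids $\tau$ if it has no occurrence of $\tau$. Fibonacci numbers: $F_1=F_2=1$, $F_{m+1}=F_m+F_{m-1}$, extended to negative index by the same recurrence, so $F_{-1}=1$. *)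

theory Defs
  imports Main "HOL-Library.Sublist"
begin

function fibz :: "int \<Rightarrow> int" where
  "fibz k = (if k = 1 \<or> k = 2 then 1
             else if k > 2 then fibz (k - 1) + fibz (k - 2)
             else fibz (k + 2) - fibz (k + 1))"
  by auto
termination
  by (relation "measure (\<lambda>k. nat \<bar>2 * k - 3\<bar>)") auto

definition reduced_form :: "nat list \<Rightarrow> nat list" where
  "reduced_form xs = map (\<lambda>x. card {y \<in> set xs. y \<le> x}) xs"

text \<open>Circular permutations of [n], represented by the linear permutation with last entry n.\<close>
definition circ_perms :: "nat \<Rightarrow> nat list set" where
  "circ_perms n = {\<pi>. distinct \<pi> \<and> set \<pi> = {1..n} \<and> last \<pi> = n}"

definition circ_contains :: "nat list \<Rightarrow> nat list \<Rightarrow> bool" where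
  "circ_contains \<pi> \<tau> = (\<exists>i ys. subseq ys (rotate i \<pi>) \<and> reduced_form ys = \<tau>)"

definition circ_avoids :: "nat list \<Rightarrow> nat list \<Rightarrow> bool" where
  "circ_avoids \<pi> \<tau> = (\<not> circ_contains \<pi> \<tau>)"

end

theory Submission
  imports Defs
begin

definition good :: "nat list \<Rightarrow> bool" where
  "good s \<longleftrightarrow> \<not>(\<exists>a b c. subseq [a,b,c] s \<and> a<c \<and> c<b) \<and>
     \<not>(\<exists>a b c d. subseq [a,b,c,d] s \<and> d<b \<and> b<a \<and> a<c)"

definition inc :: "nat list \<Rightarrow> bool" where
  "inc s \<longleftrightarrow> (\<forall>x y. subseq [x,y] s \<longrightarrow> x<y)"

lemma subseq_set: "subseq xs ys \<Longrightarrow> set xs \<subseteq> set ys"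
  by (induct rule: list_emb.induct) auto

lemma subseq_distinct: "subseq xs ys \<Longrightarrow> distinct ys \<Longrightarrow> distinct xs"
  by (induct rule: list_emb.induct) (auto dest: subseq_set)

lemma good_sub: "good s \<Longrightarrow> subseq t s \<Longrightarrow> good t"
  unfolding good_def by (meson subseq_order.trans)

lemma split3: "[a,b,c::'a] = p1 @ m # p2 \<Longrightarrow> (p1=[] \<and> a=m \<and> p2=[b,c]) \<or> (p1=[a] \<and> b=m \<and> p2=[c]) \<or> (p1=[a,b] \<and> c=m \<and> p2=[])"
  by (cases p1; cases "tl p1"; cases "tl (tl p1)"; auto)
lemma split4: "[a,b,c,d::'a] = p1 @ m # p2 \<Longrightarrow> (p1=[] \<and> a=m \<and> p2=[b,c,d]) \<or> (p1=[a] \<and> b=m \<and> p2=[c,d]) \<or> (p1=[a,b] \<and> c=m \<and> p2=[d])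
       \<or> (p1=[a,b,c] \<and> d=m \<and> p2=[])"
  by (cases p1; cases "tl p1"; cases "tl (tl p1)"; cases "tl (tl (tl p1))"; auto)
lemma subseq_Cons_right: "subseq p (x#ys) \<Longrightarrow> subseq p ys \<or> (\<exists>p'. p = x#p' \<and> subseq p' ys)"
  by (cases p; cases "hd p = x") (auto simp: list_emb_Nil)

lemma subseq_mid: "subseq p (w @ m # v) \<Longrightarrow> subseq p (w @ v) \<or> (\<exists>p1 p2. p = p1 @ m # p2 \<and> subseq p1 w \<and> subseq p2 v)"
proof -
  assume "subseq p (w @ m # v)"
  then obtain q1 q2 where q: "p = q1 @ q2" "subseq q1 w" "subseq q2 (m#v)" by (rule subseq_appendE)
  from subseq_Cons_right[OF q(3)] show ?thesis
  proof
    assume "subseq q2 v" then show ?thesis using q by (auto intro: list_emb_append_mono)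
  next
    assume "\<exists>p'. q2 = m#p' \<and> subseq p' v" then show ?thesis using q by auto
  qed
qed

lemma good_ins:
  assumes "good (w @ v)" "\<forall>x\<in>set w. \<forall>y\<in>set v. y<x" "v=[] \<or> inc w" "\<forall>x\<in>set w \<union> set v. x < m"
  shows "good (w @ m # v)"
  unfolding good_def
proof (intro conjI notI)
  assume "\<exists>a b c. subseq [a,b,c] (w @ m # v) \<and> a<c \<and> c<b"
  then obtain a b c where h: "subseq [a,b,c] (w @ m # v)" "a<c" "c<b" by blast
  from subseq_mid[OF h(1)] show False
  proof
    assume "subseq [a,b,c] (w @ v)" then show False using assms(1) h unfolding good_def by blast
  next
    assume "\<exists>p1 p2. [a,b,c] = p1 @ m # p2 \<and> subseq p1 w \<and> subseq p2 v"
    then obtain p1 p2 where p: "[a,b,c] = p1 @ m # p2" "subseq p1 w" "subseq p2 v" by blast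
    have s1: "set p1 \<subseteq> set w" "set p2 \<subseteq> set v" using p subseq_set by auto
    from split3[OF p(1)] have "(p1=[] \<and> a=m \<and> p2=[b,c]) \<or> (p1=[a] \<and> b=m \<and> p2=[c]) \<or> (p1=[a,b] \<and> c=m \<and> p2=[])" .
    then show False
    proof (elim disjE conjE)
      assume "a = m" "p2 = [b,c]"
      then have "c \<in> set v" using s1 by auto
      then have "c < m" using assms(4) by blast
      then show False using h \<open>a = m\<close> by simp
    next
      assume "p1 = [a]" "b = m" "p2 = [c]"
      then have "c \<in> set v" "a \<in> set w" using s1 by auto
      then have "c < a" using assms(2) by blast
      then show False using h by simp
    next
      assume "p1 = [a,b]" "c = m" "p2 = []"
      then have "b \<in> set w" using s1 by auto
      then have "b < m" using assms(4) by blast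
      then show False using h \<open>c = m\<close> by simp
    qed
  qed
next
  assume "\<exists>a b c d. subseq [a,b,c,d] (w @ m # v) \<and> d<b \<and> b<a \<and> a<c"
  then obtain a b c d where h: "subseq [a,b,c,d] (w @ m # v)" "d<b" "b<a" "a<c" by blast
  from subseq_mid[OF h(1)] show False
  proof
    assume "subseq [a,b,c,d] (w @ v)" then show False using assms(1) h unfolding good_def by blast
  next
    assume "\<exists>p1 p2. [a,b,c,d] = p1 @ m # p2 \<and> subseq p1 w \<and> subseq p2 v"
    then obtain p1 p2 where p: "[a,b,c,d] = p1 @ m # p2" "subseq p1 w" "subseq p2 v" by blast
    have s1: "set p1 \<subseteq> set w" "set p2 \<subseteq> set v" using p subseq_set by auto
    from p(1) have "(p1=[] \<and> a=m \<and> p2=[b,c,d]) \<or> (p1=[a] \<and> b=m \<and> p2=[c,d]) \<or> (p1=[a,b] \<and> c=m \<and> p2=[d])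
       \<or> (p1=[a,b,c] \<and> d=m \<and> p2=[])"
      by (rule split4)
    moreover have "\<not> (p1=[a,b] \<and> c=m \<and> p2=[d])"
    proof
      assume c: "p1=[a,b] \<and> c=m \<and> p2=[d]"
      then have "v \<noteq> []" using s1 by auto
      then have "inc w" using assms(3) by auto
      then have "a < b" using c p(2) unfolding inc_def by blast
      then show False using h by simp
    qed
    ultimately show False
    proof (elim disjE conjE)
      assume "a = m" "p2 = [b,c,d]"
      then have "c \<in> set v" using s1 by auto
      then have "c < m" using assms(4) by blast
      then show False using h \<open>a = m\<close> by simp
    next
      assume "p1 = [a]" "b = m" "p2 = [c,d]"
      then have "c \<in> set v" "a \<in> set w" using s1 by auto
      then have "c < a" using assms(2) by blast
      then show False using h by simp
    next
      assume "p1 = [a,b,c]" "d = m" "p2 = []"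
      then have "b \<in> set w" using s1 by auto
      then have "b < m" using assms(4) by blast
      then show False using h \<open>d = m\<close> by simp
    qed simp
  qed
qed

lemma good_struct:
  assumes "good (w @ m # v)" "distinct (w @ m # v)" "\<forall>x\<in>set w \<union> set v. x<m"
  shows "\<forall>x\<in>set w. \<forall>y\<in>set v. y<x" and "v \<noteq> [] \<Longrightarrow> inc w"
proof -
  show o: "\<forall>x\<in>set w. \<forall>y\<in>set v. y<x"
  proof (intro ballI)
    fix x y assume xy: "x \<in> set w" "y \<in> set v"
    have "x \<noteq> y" using assms(2) xy by auto
    moreover have "\<not> x < y"
    proof
      assume "x < y"
      have "subseq [x] w" using xy by (simp add: subseq_singleton_left)
      moreover have "subseq [m,y] (m#v)" using xy by (simp add: subseq_singleton_left)
      ultimately have "subseq ([x]@[m,y]) (w @ m # v)" by (rule list_emb_append_mono)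
      moreover have "y < m" using assms(3) xy by blast
      ultimately have "\<exists>a b c. subseq [a,b,c] (w @ m # v) \<and> a<c \<and> c<b" using \<open>x<y\<close> by auto
      then show False using assms(1) unfolding good_def by blast
    qed
    ultimately show "y < x" by simp
  qed
  assume "v \<noteq> []"
  then obtain z where z: "z \<in> set v" by (cases v) auto
  show "inc w" unfolding inc_def
  proof (intro allI impI)
    fix x y assume s: "subseq [x,y] w"
    have "distinct [x,y]" using subseq_distinct[OF s] assms(2) by auto
    moreover have "\<not> y < x"
    proof
      assume "y < x"
      have "subseq [m,z] (m#v)" using z by (simp add: subseq_singleton_left)
      with s have "subseq ([x,y]@[m,z]) (w @ m # v)" by (rule list_emb_append_mono)
      moreover have "z < y" using o z subseq_set[OF s] by auto
      moreover have "x < m" using assms(3) subseq_set[OF s] by auto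
      ultimately have "\<exists>a b c d. subseq [a,b,c,d] (w @ m # v) \<and> d<b \<and> b<a \<and> a<c" using \<open>y<x\<close> by auto
      then show False using assms(1) unfolding good_def by blast
    qed
    ultimately show "x < y" by auto
  qed
qed

definition A :: "nat \<Rightarrow> nat list set" where
  "A m = {s. distinct s \<and> set s = {1..m} \<and> good s}"
definition B :: "nat \<Rightarrow> nat list set" where
  "B m = {s \<in> A m. last s \<noteq> m}"
definition E :: "nat \<Rightarrow> nat list set" where
  "E m = {s \<in> A m. last s = m}"
definition insm :: "nat \<Rightarrow> nat list \<Rightarrow> nat list" where
  "insm k t = concat (map (\<lambda>x. if x = k then [k, Suc k] else [x]) t)"

lemma finite_A: "finite (A m)"
proof -
  have "A m \<subseteq> {s. set s \<subseteq> {1..m} \<and> length s = m}"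
    unfolding A_def using distinct_card by fastforce
  moreover have "finite {s. set s \<subseteq> {1..m} \<and> length s = m}"
    by (rule finite_lists_length_eq) simp
  ultimately show ?thesis by (rule finite_subset)
qed

lemma finite_B: "finite (B m)" unfolding B_def using finite_A by simp
lemma finite_E: "finite (E m)" unfolding E_def using finite_A by simp

lemma good_Nil: "good []" unfolding good_def by simp
lemma inc_Nil: "inc []" unfolding inc_def by simp

lemma A0: "A 0 = {[]}"
  unfolding A_def using good_Nil by auto

lemma card_part: "finite S \<Longrightarrow> card S = card {s\<in>S. P s} + card {s\<in>S. \<not> P s}"
proof -
  assume f: "finite S"
  have "card ({s\<in>S. P s} \<union> {s\<in>S. \<not>P s}) = card {s\<in>S. P s} + card {s\<in>S. \<not> P s}"
    by (rule card_Un_disjoint) (use f in auto)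
  moreover have "{s\<in>S. P s} \<union> {s\<in>S. \<not>P s} = S" by auto
  ultimately show ?thesis by simp
qed

lemma set_rm: "insert (Suc k) T = {1..Suc k} \<Longrightarrow> Suc k \<notin> T \<Longrightarrow> T = {1..k}"
proof -
  assume a: "insert (Suc k) T = {1..Suc k}" "Suc k \<notin> T"
  have "T = insert (Suc k) T - {Suc k}" using a(2) by auto
  also have "\<dots> = {1..Suc k} - {Suc k}" using a(1) by simp
  also have "\<dots> = {1..k}" by auto
  finally show ?thesis .
qed

lemma card_A_split: "card (A (Suc k)) = card (E (Suc k)) + card (B (Suc k))"
  unfolding E_def B_def by (rule card_part[OF finite_A])

lemma E_eq: "E (Suc k) = (\<lambda>s. s @ [Suc k]) ` A k"
proof
  show "E (Suc k) \<subseteq> (\<lambda>s. s @ [Suc k]) ` A k"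
  proof
    fix s assume s: "s \<in> E (Suc k)"
    then have d: "distinct s" "set s = {1..Suc k}" "good s" "last s = Suc k"
      unfolding E_def A_def by auto
    then have "s \<noteq> []" by auto
    then have se: "s = butlast s @ [Suc k]" using d(4) append_butlast_last_id by metis
    define t where "t = butlast s"
    have t: "s = t @ [Suc k]" using se t_def by simp
    have "distinct t" "Suc k \<notin> set t" using d(1) t by auto
    moreover have "set t = {1..k}"
    proof -
      have "set s = insert (Suc k) (set t)" using t by simp
      then show ?thesis using d(2) \<open>Suc k \<notin> set t\<close> set_rm by metis
    qed
    moreover have "good t" using good_sub[OF d(3)] t by (simp add: subseq_rev_drop_many)
    ultimately have "t \<in> A k" unfolding A_def by simp
    then show "s \<in> (\<lambda>s. s @ [Suc k]) ` A k" using t by blast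
  qed
next
  show "(\<lambda>s. s @ [Suc k]) ` A k \<subseteq> E (Suc k)"
  proof
    fix s assume "s \<in> (\<lambda>s. s @ [Suc k]) ` A k"
    then obtain t where t: "t \<in> A k" "s = t @ [Suc k]" by blast
    then have d: "distinct t" "set t = {1..k}" "good t" unfolding A_def by auto
    have "good (t @ Suc k # [])"
      by (rule good_ins) (use d in auto)
    moreover have "distinct s" "set s = {1..Suc k}" using d t by auto
    ultimately show "s \<in> E (Suc k)" unfolding E_def A_def using t by simp
  qed
qed

lemma card_E: "card (E (Suc k)) = card (A k)"
proof -
  have "inj_on (\<lambda>s. s @ [Suc k]) (A k)" by (rule inj_onI) simp
  then have "card ((\<lambda>s. s @ [Suc k]) ` A k) = card (A k)" by (rule card_image)
  then show ?thesis by (simp only: E_eq)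
qed

lemma B1_empty: "B (Suc 0) = {}"
proof -
  { fix s assume "s \<in> A (Suc 0)"
    then have s1: "set s = {1}" unfolding A_def by auto
    then have ne: "s \<noteq> []" by (metis empty_not_insert empty_set)
    have "last s \<in> set s" using ne by (rule last_in_set)
    then have "last s = Suc 0" using s1 by simp }
  then show ?thesis unfolding B_def by auto
qed

lemma card_B_split: "card (B M) = card {s\<in>B M. hd s = M} + card {s\<in>B M. hd s \<noteq> M}"
  by (rule card_part[OF finite_B])

lemma Bhd_eq: "{s\<in>B (Suc (Suc k)). hd s = Suc (Suc k)} = (\<lambda>t. Suc (Suc k) # t) ` A (Suc k)"
  (is "?L = ?R")
proof
  show "?L \<subseteq> ?R"
  proof
    fix s assume s: "s \<in> ?L"
    then have d: "distinct s" "set s = {1..Suc (Suc k)}" "good s" "hd s = Suc (Suc k)"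
      unfolding B_def A_def by auto
    then have "s \<noteq> []" by auto
    then have st: "s = Suc (Suc k) # tl s" using d(4) list.collapse by metis
    define t where "t = tl s"
    have t: "s = Suc (Suc k) # t" using st t_def by simp
    have "distinct t" "Suc (Suc k) \<notin> set t" using d(1) t by auto
    moreover have "set t = {1..Suc k}"
    proof -
      have "set s = insert (Suc (Suc k)) (set t)" using t by simp
      then show ?thesis using d(2) \<open>Suc (Suc k) \<notin> set t\<close> set_rm by metis
    qed
    moreover have "good t" using good_sub[OF d(3)] t by (simp add: list_emb_Cons)
    ultimately have "t \<in> A (Suc k)" unfolding A_def by simp
    then show "s \<in> ?R" using t by blast
  qed
next
  show "?R \<subseteq> ?L"
  proof
    fix s assume "s \<in> ?R"
    then obtain t where t: "t \<in> A (Suc k)" "s = Suc (Suc k) # t" by blast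
    then have d: "distinct t" "set t = {1..Suc k}" "good t" unfolding A_def by auto
    have "good ([] @ Suc (Suc k) # t)"
      by (rule good_ins) (use d inc_Nil in auto)
    moreover have "distinct s" "set s = {1..Suc (Suc k)}" using d t by auto
    moreover have "last s \<noteq> Suc (Suc k)"
    proof -
      have "t \<noteq> []" using d by auto
      then have "last s = last t" "last t \<in> set t" using t by auto
      then show ?thesis using d by auto
    qed
    ultimately show "s \<in> ?L" unfolding B_def A_def using t by simp
  qed
qed

lemma card_Bhd: "card {s\<in>B (Suc (Suc k)). hd s = Suc (Suc k)} = card (A (Suc k))"
proof -
  have "inj_on (\<lambda>t. Suc (Suc k) # t) (A (Suc k))" by (rule inj_onI) simp
  then have "card ((\<lambda>t. Suc (Suc k) # t) ` A (Suc k)) = card (A (Suc k))" by (rule card_image)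
  then show ?thesis by (simp only: Bhd_eq)
qed

lemma insm_id: "k \<notin> set xs \<Longrightarrow> insm k xs = xs"
  unfolding insm_def by (induct xs) auto

lemma insm_append: "insm k (xs @ ys) = insm k xs @ insm k ys"
  unfolding insm_def by simp

lemma insm_Cons_k: "insm k (k # xs) = k # Suc k # insm k xs"
  unfolding insm_def by simp

lemma filter_insm: "Suc k \<notin> set xs \<Longrightarrow> filter (\<lambda>x. x \<noteq> Suc k) (insm k xs) = xs"
  unfolding insm_def by (induct xs) auto

lemma subseq_Nil_right: "subseq p [] \<Longrightarrow> p = []"
  by (cases p) auto

lemma inc_snoc:
  assumes "inc u" "\<forall>x\<in>set u. x < m"
  shows "inc (u @ [m])"
  unfolding inc_def
proof (intro allI impI)
  fix x y assume s: "subseq [x,y] (u @ [m])"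
  from subseq_mid[of "[x,y]" u m "[]"] s
  have "subseq [x,y] (u @ []) \<or> (\<exists>p1 p2. [x,y] = p1 @ m # p2 \<and> subseq p1 u \<and> subseq p2 [])" by simp
  then show "x < y"
  proof
    assume "subseq [x,y] (u @ [])" then show ?thesis using assms(1) unfolding inc_def by simp
  next
    assume "\<exists>p1 p2. [x,y] = p1 @ m # p2 \<and> subseq p1 u \<and> subseq p2 []"
    then obtain p1 p2 where p: "[x,y] = p1 @ m # p2" "subseq p1 u" "subseq p2 []" by blast
    then have "p2 = []" using subseq_Nil_right by blast
    then have "p1 = [x]" "y = m" using p(1) by auto
    then have "x \<in> set u" using p(2) subseq_set by fastforce
    then show ?thesis using assms(2) \<open>y = m\<close> by blast
  qed
qed

lemma B2_eq: "{s\<in>B (Suc (Suc k)). hd s \<noteq> Suc (Suc k)} = insm (Suc k) ` B (Suc k)"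
  (is "?L = ?R")
proof
  show "?R \<subseteq> ?L"
  proof
    fix s assume "s \<in> ?R"
    then obtain t where t: "t \<in> B (Suc k)" "s = insm (Suc k) t" by blast
    then have d: "distinct t" "set t = {1..Suc k}" "good t" "last t \<noteq> Suc k"
      unfolding B_def A_def by auto
    have "Suc k \<in> set t" using d by auto
    then obtain u v where uv: "t = u @ Suc k # v" using split_list by metis
    have vne: "v \<noteq> []" using d(4) uv by auto
    have bnd: "\<forall>x\<in>set u \<union> set v. x < Suc k"
    proof
      fix x assume "x \<in> set u \<union> set v"
      then have "x \<in> set t" "x \<noteq> Suc k" using uv d(1) by auto
      then show "x < Suc k" using d(2) by auto
    qed
    have ord: "\<forall>x\<in>set u. \<forall>y\<in>set v. y<x" and iu: "inc u"
      using good_struct[of u "Suc k" v] d(1,3) uv bnd vne by auto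
    have nu: "Suc k \<notin> set u" "Suc k \<notin> set v" using d(1) uv by auto
    have seq: "s = u @ Suc k # Suc (Suc k) # v"
      using t(2) uv insm_id[OF nu(1)] insm_id[OF nu(2)] by (simp add: insm_append insm_Cons_k)
    have g: "good ((u @ [Suc k]) @ Suc (Suc k) # v)"
    proof (rule good_ins)
      show "good ((u @ [Suc k]) @ v)" using d(3) uv by simp
      show "\<forall>x\<in>set (u @ [Suc k]). \<forall>y\<in>set v. y < x" using ord bnd by auto
      show "v = [] \<or> inc (u @ [Suc k])" using inc_snoc[OF iu] bnd by auto
      show "\<forall>x\<in>set (u @ [Suc k]) \<union> set v. x < Suc (Suc k)"
      proof
        fix x assume x: "x \<in> set (u @ [Suc k]) \<union> set v"
        show "x < Suc (Suc k)"
        proof (cases "x = Suc k")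
          case False
          then have "x \<in> set u \<union> set v" using x by auto
          then have "x < Suc k" using bnd by blast
          then show ?thesis by simp
        qed simp
      qed
    qed
    have nM: "Suc (Suc k) \<notin> set u" "Suc (Suc k) \<notin> set v"
    proof -
      show "Suc (Suc k) \<notin> set u"
      proof
        assume "Suc (Suc k) \<in> set u" then have "Suc (Suc k) < Suc k" using bnd by blast
        then show False by simp
      qed
      show "Suc (Suc k) \<notin> set v"
      proof
        assume "Suc (Suc k) \<in> set v" then have "Suc (Suc k) < Suc k" using bnd by blast
        then show False by simp
      qed
    qed
    have "distinct s" using d(1) uv seq nM by auto
    moreover have "set s = {1..Suc (Suc k)}"
    proof -
      have "set s = insert (Suc (Suc k)) (set t)" using seq uv by auto
      then show ?thesis using d(2) by auto
    qed
    moreover have "good s" using g seq by simp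
    moreover have "last s \<noteq> Suc (Suc k)"
    proof -
      have "last s = last v" "last v \<in> set v" using seq vne by auto
      then show ?thesis using nM by auto
    qed
    moreover have "hd s \<noteq> Suc (Suc k)"
      using seq nM by (cases u) auto
    ultimately show "s \<in> ?L" unfolding B_def A_def by simp
  qed
next
  show "?L \<subseteq> ?R"
  proof
    fix s assume s: "s \<in> ?L"
    then have d: "distinct s" "set s = {1..Suc (Suc k)}" "good s" "last s \<noteq> Suc (Suc k)"
      "hd s \<noteq> Suc (Suc k)"
      unfolding B_def A_def by auto
    have "Suc (Suc k) \<in> set s" using d by auto
    then obtain w v where wv: "s = w @ Suc (Suc k) # v" using split_list by metis
    have vne: "v \<noteq> []" using d(4) wv by auto
    have wne: "w \<noteq> []" using d(5) wv by auto
    have bnd: "\<forall>x\<in>set w \<union> set v. x < Suc (Suc k)"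
    proof
      fix x assume "x \<in> set w \<union> set v"
      then have "x \<in> set s" "x \<noteq> Suc (Suc k)" using wv d(1) by auto
      then show "x < Suc (Suc k)" using d(2) by auto
    qed
    have ord: "\<forall>x\<in>set w. \<forall>y\<in>set v. y<x" and iw: "inc w"
      using good_struct[of w "Suc (Suc k)" v] d(1,3) wv bnd vne by auto
    have "Suc k \<in> set s" using d(2) by auto
    then have "Suc k \<in> set w \<or> Suc k \<in> set v" using wv by auto
    moreover have "Suc k \<notin> set v"
    proof
      assume kv: "Suc k \<in> set v"
      obtain x where x: "x \<in> set w" using wne by (cases w) auto
      then have "Suc k < x" "x < Suc (Suc k)" using ord kv bnd by auto
      then show False by simp
    qed
    ultimately have "Suc k \<in> set w" by simp
    then obtain w1 w2 where w12: "w = w1 @ Suc k # w2" using split_list by metis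
    have "w2 = []"
    proof (rule ccontr)
      assume "w2 \<noteq> []"
      then obtain y where y: "y \<in> set w2" by (cases w2) auto
      have "subseq ([] @ [Suc k, y]) (w1 @ Suc k # w2)"
        by (rule list_emb_append_mono) (use y in \<open>auto simp: subseq_singleton_left\<close>)
      then have "Suc k < y" using iw w12 unfolding inc_def by simp
      moreover have "y < Suc (Suc k)" using bnd w12 y by auto
      ultimately show False by simp
    qed
    then have seq: "s = w1 @ Suc k # Suc (Suc k) # v" using wv w12 by simp
    define t where "t = w1 @ Suc k # v"
    have nu: "Suc k \<notin> set w1" "Suc k \<notin> set v" "Suc (Suc k) \<notin> set w1" "Suc (Suc k) \<notin> set v"
      using d(1) seq by auto
    have "distinct t" using d(1) seq t_def by auto
    moreover have "set t = {1..Suc k}"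
    proof -
      have "insert (Suc (Suc k)) (set t) = set s" "Suc (Suc k) \<notin> set t"
        using seq t_def nu by auto
      then show ?thesis using d(2) set_rm by metis
    qed
    moreover have "good t"
    proof -
      have "subseq (Suc k # v) (Suc k # Suc (Suc k) # v)" by (simp add: list_emb_Cons)
      then have "subseq t s" using seq t_def by (simp add: subseq_append')
      then show ?thesis using good_sub d(3) by blast
    qed
    moreover have "last t \<noteq> Suc k"
    proof -
      have "last t = last v" "last v \<in> set v" using t_def vne by auto
      then show ?thesis using nu by auto
    qed
    ultimately have "t \<in> B (Suc k)" unfolding B_def A_def by simp
    moreover have "s = insm (Suc k) t"
      using seq t_def insm_id[OF nu(1)] insm_id[OF nu(2)] by (simp add: insm_append insm_Cons_k)
    ultimately show "s \<in> ?R" by (rule rev_image_eqI)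
  qed
qed

lemma card_B2: "card {s\<in>B (Suc (Suc k)). hd s \<noteq> Suc (Suc k)} = card (B (Suc k))"
proof -
  have "inj_on (insm (Suc k)) (B (Suc k))"
  proof (rule inj_on_inverseI)
    fix t assume "t \<in> B (Suc k)"
    then have "Suc (Suc k) \<notin> set t" unfolding B_def A_def by auto
    then show "filter (\<lambda>x. x \<noteq> Suc (Suc k)) (insm (Suc k) t) = t" by (rule filter_insm)
  qed
  then have "card (insm (Suc k) ` B (Suc k)) = card (B (Suc k))" by (rule card_image)
  then show ?thesis by (simp only: B2_eq)
qed

declare fibz.simps[simp del]

lemma fibz_vals: "fibz 1 = 1" "fibz 2 = 1" "fibz 0 = 0" "fibz (-1) = 1"
proof -
  show f1: "fibz 1 = 1" by (subst fibz.simps) simp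
  show f2: "fibz 2 = 1" by (subst fibz.simps) simp
  have "fibz 0 = fibz 2 - fibz 1" by (subst fibz.simps) simp
  then show f0: "fibz 0 = 0" using f1 f2 by simp
  have "fibz (-1) = fibz 1 - fibz 0" by (subst fibz.simps) simp
  then show "fibz (-1) = 1" using f1 f0 by simp
qed

lemma fibz_rec: "k \<ge> -1 \<Longrightarrow> fibz (k+2) = fibz (k+1) + fibz k"
proof -
  assume k: "k \<ge> -1"
  consider "k = -1" | "k = 0" | "k \<ge> 1" using k by linarith
  then show ?thesis
  proof cases
    case 1 then show ?thesis using fibz_vals by simp
  next
    case 2 then show ?thesis using fibz_vals by simp
  next
    case 3
    have "fibz (k+2) = (if k+2 = 1 \<or> k+2 = 2 then 1 else if k+2 > 2 then fibz (k+2 - 1) + fibz (k+2 - 2)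
             else fibz (k+2 + 2) - fibz (k+2 + 1))" by (rule fibz.simps)
    also have "\<dots> = fibz (k+2 - 1) + fibz (k+2 - 2)" using 3 by simp
    also have "\<dots> = fibz (k+1) + fibz k" by (simp add: algebra_simps)
    finally show ?thesis .
  qed
qed

lemma counts: "int (card (A k)) = fibz (2*int k - 1) \<and> int (card (B (Suc k))) = fibz (2 * int k)"
proof (induction k)
  case 0
  have "card (A 0) = 1" using A0 by simp
  moreover have "card (B (Suc 0)) = 0" using B1_empty by simp
  ultimately show ?case using fibz_vals by simp
next
  case (Suc k)
  have a: "int (card (A (Suc k))) = int (card (A k)) + int (card (B (Suc k)))"
    using card_A_split card_E by simp
  have e1: "2 * int (Suc k) - 1 = (2 * int k - 1) + 2" by simp
  have e2: "2 * int k = (2 * int k - 1) + 1" by simp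
  have r1: "fibz (2 * int (Suc k) - 1) = fibz (2 * int k) + fibz (2*int k - 1)"
    using fibz_rec[of "2 * int k - 1"] e1 e2 by simp
  have A': "int (card (A (Suc k))) = fibz (2 * int (Suc k) - 1)" using a Suc.IH r1 by simp
  have b: "int (card (B (Suc (Suc k)))) = int (card (A (Suc k))) + int (card (B (Suc k)))"
    using card_B_split[of "Suc (Suc k)"] card_Bhd card_B2 by simp
  have e3: "2 * int (Suc k) = 2 * int k + 2" by simp
  have r2: "fibz (2 * int (Suc k)) = fibz (2 * int k + 1) + fibz (2*int k)"
  proof -
    have "fibz (2 * int (Suc k)) = fibz (2*int k + 2)" using e3 by (rule arg_cong)
    also have "\<dots> = fibz (2 * int k + 1) + fibz (2*int k)" by (rule fibz_rec) simp
    finally show ?thesis .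
  qed
  have e4: "2 * int (Suc k) - 1 = 2 * int k + 1" by simp
  have B': "int (card (B (Suc (Suc k)))) = fibz (2 * int (Suc k))"
    using b A' Suc.IH r2 e4 by (simp add: ac_simps)
  show ?case using A' B' by simp
qed

lemma rank_lt:
  assumes "finite (S::nat set)" "card {y\<in>S. y \<le> x} < card {y\<in>S. y \<le> x'}"
  shows "x < x'"
proof (rule ccontr)
  assume "\<not> x < x'"
  then have "{y\<in>S. y \<le> x'} \<subseteq> {y\<in>S. y \<le> x}" by auto
  then have "card {y\<in>S. y \<le> x'} \<le> card {y\<in>S. y \<le> x}" using assms(1) by (simp add: card_mono)
  then show False using assms(2) by simp
qed

lemma red_iff: "reduced_form ys = [1,3,2,4] \<longleftrightarrow> (\<exists>a b c d. ys = [a,b,c,d] \<and> a<c \<and> c<b \<and> b<d)"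
proof
  assume h: "reduced_form ys = [1,3,2,4]"
  then have "length (reduced_form ys) = 4" by simp
  then have "length ys = 4" unfolding reduced_form_def by simp
  then obtain a b c d where ys: "ys = [a,b,c,d]"
    by (auto simp: length_Suc_conv numeral_eq_Suc)
  let ?S = "set [a,b,c,d]"
  have r: "card {y\<in>?S. y \<le> a} = 1" "card {y\<in>?S. y \<le> b} = 3" "card {y\<in>?S. y \<le> c} = 2"
     "card {y\<in>?S. y \<le> d} = 4"
    using h unfolding ys reduced_form_def by simp_all
  have f: "finite ?S" by simp
  have "a < c" by (rule rank_lt[OF f]) (use r in simp)
  moreover have "c < b" by (rule rank_lt[OF f]) (use r in simp)
  moreover have "b < d" by (rule rank_lt[OF f]) (use r in simp)
  ultimately show "\<exists>a b c d. ys = [a,b,c,d] \<and> a<c \<and> c<b \<and> b<d" using ys by blast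
next
  assume "\<exists>a b c d. ys = [a,b,c,d] \<and> a<c \<and> c<b \<and> b<d"
  then obtain a b c d where ys: "ys = [a,b,c,d]" and o: "a<c" "c<b" "b<d" by blast
  let ?S = "set [a,b,c,d]"
  have "{y\<in>?S. y \<le> a} = {a}" using o by auto
  moreover have "{y\<in>?S. y \<le> b} = {a,b,c}" using o by auto
  moreover have "{y\<in>?S. y \<le> c} = {a,c}" using o by auto
  moreover have "{y\<in>?S. y \<le> d} = {a,b,c,d}" using o by auto
  ultimately show "reduced_form ys = [1,3,2,4]" unfolding ys reduced_form_def using o by simp
qed

lemma split_app4: "[a,b,c,d::'a] = q1 @ q2 \<Longrightarrow> (q1 = [] \<and> q2 = [a,b,c,d]) \<or> (q1 = [a] \<and> q2 = [b,c,d])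
   \<or> (q1 = [a,b] \<and> q2 = [c,d]) \<or> (q1 = [a,b,c] \<and> q2 = [d]) \<or> (q1 = [a,b,c,d] \<and> q2 = [])"
  by (cases q1; cases "tl q1"; cases "tl (tl q1)"; cases "tl (tl (tl q1))"; auto)

lemma rot: "\<exists>s1 s2. \<sigma> = s1 @ s2 \<and> rotate i (\<sigma> @ [x]) = s2 @ x # s1"
proof -
  define j where "j = i mod length (\<sigma> @ [x])"
  have jl: "j \<le> length \<sigma>" unfolding j_def by (simp add: less_Suc_eq_le)
  have "rotate i (\<sigma> @ [x]) = drop j (\<sigma> @ [x]) @ take j (\<sigma> @ [x])"
    unfolding j_def by (rule rotate_drop_take)
  also have "\<dots> = drop j \<sigma> @ x # take j \<sigma>" using jl by simp
  finally show ?thesis by (metis append_take_drop_id)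
qed

lemma sub3of4: "subseq [a,b,c] [a,b,c,d]" by (blast intro: subseq_Cons2 list_emb_Cons list_emb_Nil)
lemma sub_cdb: "subseq [c,d,b] [c,d,a,b]" by (blast intro: subseq_Cons2 list_emb_Cons list_emb_Nil)
lemma sub_abc: "subseq [a,b,c] [d,a,b,c]" by (blast intro: subseq_Cons2 list_emb_Cons list_emb_Nil)

lemma bad132: "subseq [a,b,c] t \<Longrightarrow> a<c \<Longrightarrow> c<b \<Longrightarrow> \<not> good t"
  unfolding good_def by blast
lemma bad3241: "subseq [a,b,c,d] t \<Longrightarrow> d<b \<Longrightarrow> b<a \<Longrightarrow> a<c \<Longrightarrow> \<not> good t"
  unfolding good_def by blast

lemma circ_iff:
  assumes "distinct \<sigma>" "set \<sigma> = {1..k}"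
  shows "circ_contains (\<sigma> @ [Suc k]) [1,3,2,4] \<longleftrightarrow> \<not> good \<sigma>"
proof
  have bnd: "\<And>x. x \<in> set \<sigma> \<Longrightarrow> x < Suc k" using assms(2) by auto
  assume "circ_contains (\<sigma> @ [Suc k]) [1,3,2,4]"
  then obtain i ys where iy: "subseq ys (rotate i (\<sigma> @ [Suc k]))" "reduced_form ys = [1,3,2,4]"
    unfolding circ_contains_def by blast
  from iy(2)[unfolded red_iff] obtain a b c d where ys: "ys = [a,b,c,d]" and o: "a<c" "c<b" "b<d"
    by blast
  from rot[of \<sigma> i "Suc k"] obtain s1 s2 where s: "\<sigma> = s1 @ s2" "rotate i (\<sigma> @ [Suc k]) = s2 @ Suc k # s1"
    by blast
  have sub: "subseq [a,b,c,d] (s2 @ Suc k # s1)" using iy(1) ys s(2) by simp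
  show "\<not> good \<sigma>"
  proof
    assume g: "good \<sigma>"
    from subseq_mid[OF sub] show False
    proof
      assume "subseq [a,b,c,d] (s2 @ s1)"
      then obtain q1 q2 where q: "[a,b,c,d] = q1 @ q2" "subseq q1 s2" "subseq q2 s1"
        by (rule subseq_appendE)
      have "subseq (q2 @ q1) \<sigma>" using q s(1) by (simp add: list_emb_append_mono)
      then have gq: "good (q2 @ q1)" using g good_sub by blast
      from split_app4[OF q(1)] show False
      proof (elim disjE conjE)
        assume "q1 = []" "q2 = [a,b,c,d]"
        moreover have "\<not> good [a,b,c,d]" using bad132[OF sub3of4] o by blast
        ultimately show False using gq by simp
      next
        assume "q1 = [a]" "q2 = [b,c,d]"
        moreover have "\<not> good [b,c,d,a]" using bad3241[OF subseq_order.refl] o by blast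
        ultimately show False using gq by simp
      next
        assume "q1 = [a,b]" "q2 = [c,d]"
        moreover have "\<not> good [c,d,a,b]" using bad132[OF sub_cdb] o by blast
        ultimately show False using gq by simp
      next
        assume "q1 = [a,b,c]" "q2 = [d]"
        moreover have "\<not> good [d,a,b,c]" using bad132[OF sub_abc] o by blast
        ultimately show False using gq by simp
      next
        assume "q1 = [a,b,c,d]" "q2 = []"
        moreover have "\<not> good [a,b,c,d]" using bad132[OF sub3of4] o by blast
        ultimately show False using gq by simp
      qed
    next
      assume "\<exists>p1 p2. [a,b,c,d] = p1 @ Suc k # p2 \<and> subseq p1 s2 \<and> subseq p2 s1"
      then obtain p1 p2 where p: "[a,b,c,d] = p1 @ Suc k # p2" "subseq p1 s2" "subseq p2 s1" by blast
      have s1s: "set p2 \<subseteq> set \<sigma>" using subseq_set[OF p(3)] s(1) by auto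
      from split4[OF p(1)] show False
      proof (elim disjE conjE)
        assume "a = Suc k" "p2 = [b,c,d]"
        then have "c < Suc k" using s1s bnd by auto
        then show False using o \<open>a = Suc k\<close> by simp
      next
        assume "b = Suc k" "p2 = [c,d]"
        then have "d < Suc k" using s1s bnd by auto
        then show False using o \<open>b = Suc k\<close> by simp
      next
        assume "c = Suc k" "p2 = [d]"
        then have "d < Suc k" using s1s bnd by auto
        then show False using o \<open>c = Suc k\<close> by simp
      next
        assume "p1 = [a,b,c]"
        then have "subseq [a,b,c] \<sigma>" using p(2) s(1) by (simp add: subseq_drop_many)
        then show False using g o bad132 by blast
      qed
    qed
  qed
next
  have bnd: "\<And>x. x \<in> set \<sigma> \<Longrightarrow> x < Suc k" using assms(2) by auto
  assume "\<not> good \<sigma>"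
  then consider (p132) a b c where "subseq [a,b,c] \<sigma>" "a<c" "c<b"
    | (p3241) a b c d where "subseq [a,b,c,d] \<sigma>" "d<b" "b<a" "a<c"
    unfolding good_def by blast
  then show "circ_contains (\<sigma> @ [Suc k]) [1,3,2,4]"
  proof cases
    case p132
    have "b < Suc k" using bnd subseq_set[OF p132(1)] by auto
    have "subseq ([a,b,c] @ [Suc k]) (\<sigma> @ [Suc k])"
      using p132(1) by (rule list_emb_append_mono) simp
    moreover have "reduced_form [a,b,c,Suc k] = [1,3,2,4]"
      using red_iff p132 \<open>b < Suc k\<close> by blast
    ultimately show ?thesis unfolding circ_contains_def
      by (metis append_Cons append_Nil rotate0 id_apply)
  next
    case p3241
    have "subseq ([a,b,c] @ [d]) \<sigma>" using p3241(1) by simp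
    then obtain us vs where u: "\<sigma> = us @ vs" "subseq [a,b,c] us" "subseq [d] vs"
      using list_emb_appendD by blast
    have r: "rotate (length us) (\<sigma> @ [Suc k]) = (vs @ [Suc k]) @ us"
      using u(1) rotate_append[of us "vs @ [Suc k]"] by simp
    have "subseq ([d] @ [a,b,c]) ((vs @ [Suc k]) @ us)"
      by (rule list_emb_append_mono) (use u in \<open>auto simp: subseq_rev_drop_many\<close>)
    moreover have "reduced_form [d,a,b,c] = [1,3,2,4]"
      using red_iff p3241 by blast
    ultimately show ?thesis unfolding circ_contains_def using r
      by (metis append_Cons append_Nil)
  qed
qed

lemma main_eq: "{\<pi> \<in> circ_perms (Suc k). circ_avoids \<pi> [1,3,2,4]} = (\<lambda>\<sigma>. \<sigma> @ [Suc k]) ` A k"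
  (is "?L = ?R")
proof
  show "?L \<subseteq> ?R"
  proof
    fix p assume p: "p \<in> ?L"
    then have d: "distinct p" "set p = {1..Suc k}" "last p = Suc k" "circ_avoids p [1,3,2,4]"
      unfolding circ_perms_def by auto
    have ne: "p \<noteq> []" using d(2) by auto
    define \<sigma> where "\<sigma> = butlast p"
    have ps: "p = \<sigma> @ [Suc k]" using ne d(3) \<sigma>_def append_butlast_last_id by metis
    have ds: "distinct \<sigma>" "Suc k \<notin> set \<sigma>" using d(1) ps by auto
    have ss: "set \<sigma> = {1..k}"
    proof -
      have "insert (Suc k) (set \<sigma>) = {1..Suc k}" using d(2) ps by simp
      then show ?thesis using ds(2) set_rm by metis
    qed
    have "good \<sigma>" using circ_iff[OF ds(1) ss] d(4) ps unfolding circ_avoids_def by simp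
    then have "\<sigma> \<in> A k" unfolding A_def using ds ss by simp
    then show "p \<in> ?R" using ps by blast
  qed
next
  show "?R \<subseteq> ?L"
  proof
    fix p assume "p \<in> ?R"
    then obtain \<sigma> where s: "\<sigma> \<in> A k" "p = \<sigma> @ [Suc k]" by blast
    then have d: "distinct \<sigma>" "set \<sigma> = {1..k}" "good \<sigma>" unfolding A_def by auto
    have "circ_avoids p [1,3,2,4]" using circ_iff[OF d(1) d(2)] d(3) s(2)
      unfolding circ_avoids_def by simp
    moreover have "distinct p" "set p = {1..Suc k}" "last p = Suc k" using d s(2) by auto
    ultimately show "p \<in> ?L" unfolding circ_perms_def by simp
  qed
qed

theorem theorem1:
  fixes n :: nat
  assumes "n \<ge> 1"
  shows "int (card {\<pi> \<in> circ_perms n. circ_avoids \<pi> [1, 3, 2, 4]}) = fibz (2 * int n - 3)"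
proof -
  obtain k where n: "n = Suc k" using assms by (cases n) auto
  have "inj_on (\<lambda>\<sigma>. \<sigma> @ [Suc k]) (A k)" by (rule inj_onI) simp
  then have "card ((\<lambda>\<sigma>. \<sigma> @ [Suc k]) ` A k) = card (A k)" by (rule card_image)
  then have "card {\<pi> \<in> circ_perms n. circ_avoids \<pi> [1, 3, 2, 4]} = card (A k)"
    unfolding n by (simp only: main_eq)
  moreover have "int (card (A k)) = fibz (2 * int k - 1)" using counts by blast
  moreover have "2 * int n - 3 = 2 * int k - 1" using n by simp
  ultimately show ?thesis by simp
qed

end
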